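(* Let $b\ge 2$. For every finite nonempty string $I$ of base-$b$ digits there exist infinitely many $b$-wARH numbers whose base-$b$ representation contains $I$ as a contiguous substring.
   Context: Fix a base $b\ge 2$. $s_b(N)$ is the sum of the base-$b$ digits of $N$. For a positive integer $X$, its reversal $X^R$ is the integer whose base-$b$ representation is that of $X$ written in reverse order (leading zeros of the result are dropped). A positive integer $N$ is a $b$-wARH number if there exists an integer $A\ge 0$ such that $N=(A+s_b(N))+(A+s_b(N))^R$. *)

theory Defs
  imports Main
begin

fun digits :: "nat \<Rightarrow> nat \<Rightarrow> nat list" where
  "digits b n = (if b < 2 \<or> n = 0 then [] else n mod b # digits b (n div b))"

declare digits.simps[simp del]

(* value of a digit list, most significant first *)
definition from_digits :: "nat \<Rightarrow> nat list \<Rightarrow> nat" where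
  "from_digits b ds = foldl (\<lambda>acc d. acc * b + d) 0 ds"

definition repr :: "nat \<Rightarrow> nat \<Rightarrow> nat list" where
  "repr b n = rev (digits b n)"

definition digit_sum :: "nat \<Rightarrow> nat \<Rightarrow> nat" where
  "digit_sum b n = sum_list (digits b n)"

(* reversal: read the representation backwards; leading zeros vanish in the value *)
definition reversal :: "nat \<Rightarrow> nat \<Rightarrow> nat" where
  "reversal b x = from_digits b (rev (repr b x))"

definition wARH :: "nat \<Rightarrow> nat \<Rightarrow> bool" where
  "wARH b N \<longleftrightarrow> N > 0 \<and>
     (\<exists>A::nat. N = (A + digit_sum b N) + reversal b (A + digit_sum b N))"

definition contiguous_sub :: "'a list \<Rightarrow> 'a list \<Rightarrow> bool" where
  "contiguous_sub I xs \<longleftrightarrow> (\<exists>u v. xs = u @ I @ v)"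

end

theory Submission
  imports Defs
begin

fun pd :: "nat \<Rightarrow> nat \<Rightarrow> nat \<Rightarrow> nat list" where
  "pd b 0 c = []"
| "pd b (Suc z) c = c mod b # pd b z (c div b)"

lemma digits_step: "b \<ge> 2 \<Longrightarrow> n > 0 \<Longrightarrow> digits b n = n mod b # digits b (n div b)"
  by (subst digits.simps) auto

lemma digits_0[simp]: "digits b 0 = []"
  by (subst digits.simps) auto

lemma digits_pd:
  assumes "b \<ge> 2" "a > 0"
  shows "c < b^z \<Longrightarrow> digits b (a*b^z + c) = pd b z c @ digits b a"
proof (induction z arbitrary: c)
  case 0 then show ?case by simp
next
  case (Suc z)
  have pos: "a*b^Suc z + c > 0" using assms by simp
  have e: "a*b^Suc z + c = (a*b^z)*b + c" by simp
  have m: "(a*b^Suc z + c) mod b = c mod b" unfolding e by simp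
  have d: "(a*b^Suc z + c) div b = a*b^z + c div b" unfolding e using assms by simp
  have "c div b < b^z" using Suc.prems assms by (simp add: less_mult_imp_div_less mult.commute)
  then show ?case using digits_step[OF assms(1) pos] m d Suc.IH by simp
qed

lemma pd_0: "pd b z 0 = replicate z 0"
  by (induction z) auto

lemma pd_bound: "b \<ge> 2 \<Longrightarrow> x \<in> set (pd b z c) \<Longrightarrow> x < b"
  by (induction z arbitrary: c) auto

lemma length_pd[simp]: "length (pd b z c) = z"
  by (induction z arbitrary: c) auto

lemma sum_list_le: "(\<forall>x\<in>set xs. x \<le> k) \<Longrightarrow> sum_list xs \<le> length xs * k"
  by (induction xs) auto

lemma digits_bound: "b \<ge> 2 \<Longrightarrow> x \<in> set (digits b n) \<Longrightarrow> x < b"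
proof (induction n rule: less_induct)
  case (less n)
  show ?case
  proof (cases "n = 0")
    case True then show ?thesis using less by simp
  next
    case False
    then have lt: "n div b < n" using less.prems by simp
    have "x = n mod b \<or> x \<in> set (digits b (n div b))"
      using less.prems(2) digits_step[OF less.prems(1)] False by simp
    then show ?thesis
    proof
      assume "x = n mod b" then show ?thesis using less.prems(1) by simp
    next
      assume "x \<in> set (digits b (n div b))" then show ?thesis using less.IH[OF lt] less.prems(1) by blast
    qed
  qed
qed

lemma ds_le: "b \<ge> 2 \<Longrightarrow> sum_list (digits b n) \<le> n"
proof (induction n rule: less_induct)
  case (less n)
  show ?case
  proof (cases "n = 0")
    case True then show ?thesis by simp
  next
    case False
    then have lt: "n div b < n" using less.prems by simp
    have "sum_list (digits b n) = n mod b + sum_list (digits b (n div b))"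
      using digits_step[OF less.prems(1)] False by simp
    also have "\<dots> \<le> n mod b + n div b" using less.IH[OF lt] less.prems by simp
    also have "\<dots> \<le> n"
    proof -
      have "n div b \<le> n div b * b" using less.prems by simp
      then show ?thesis using div_mult_mod_eq[of n b] by linarith
    qed
    finally show ?thesis .
  qed
qed

lemma fd_snoc: "from_digits b (xs @ [d]) = from_digits b xs * b + d"
  unfolding from_digits_def by simp

lemma fd_zeros: "from_digits b (replicate z 0 @ xs) = from_digits b xs"
proof -
  have "foldl (\<lambda>acc d. acc * b + d) 0 (replicate z 0) = 0" by (induction z) auto
  then show ?thesis unfolding from_digits_def by simp
qed

lemma fd_less: "b \<ge> 2 \<Longrightarrow> \<forall>x\<in>set xs. x < b \<Longrightarrow> from_digits b xs < b ^ length xs"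
proof (induction xs rule: rev_induct)
  case Nil then show ?case by (simp add: from_digits_def)
next
  case (snoc d xs)
  have h: "from_digits b xs + 1 \<le> b ^ length xs" using snoc by simp
  have "from_digits b (xs @ [d]) = from_digits b xs * b + d" by (rule fd_snoc)
  also have "\<dots> < from_digits b xs * b + b" using snoc by simp
  also have "\<dots> = (from_digits b xs + 1) * b" by simp
  also have "\<dots> \<le> b ^ length xs * b" using h by (rule mult_le_mono1)
  finally show ?case by (simp add: mult.commute)
qed

lemma fd_one_pos: "b \<ge> 2 \<Longrightarrow> from_digits b (1 # xs) \<ge> 1"
proof (induction xs rule: rev_induct)
  case Nil then show ?case by (simp add: from_digits_def)
next
  case (snoc d xs)
  have "from_digits b (1 # xs @ [d]) = from_digits b (1 # xs) * b + d"
    using fd_snoc[of b "1#xs" d] by simp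
  moreover have "from_digits b (1 # xs) \<le> from_digits b (1 # xs) * b" using snoc.prems by simp
  ultimately show ?case using snoc by linarith
qed

lemma digits_fd: "b \<ge> 2 \<Longrightarrow> \<forall>x\<in>set xs. x < b \<Longrightarrow> digits b (from_digits b (1 # xs)) = rev (1 # xs)"
proof (induction xs rule: rev_induct)
  case Nil
  have "from_digits b [1] = 1" by (simp add: from_digits_def)
  then show ?case using Nil digits_step[of b 1] by simp
next
  case (snoc d xs)
  have e: "from_digits b (1 # xs @ [d]) = from_digits b (1 # xs) * b + d"
    using fd_snoc[of b "1#xs" d] by simp
  have "from_digits b (1 # xs) \<le> from_digits b (1 # xs) * b" using snoc.prems by simp
  then have p: "from_digits b (1 # xs) * b + d > 0" using fd_one_pos[OF snoc.prems(1), of xs] by linarith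
  have dl: "d < b" using snoc.prems by simp
  have m: "(from_digits b (1 # xs) * b + d) mod b = d" using dl by simp
  have dv: "(from_digits b (1 # xs) * b + d) div b = from_digits b (1 # xs)" using dl by simp
  show ?case unfolding e using digits_step[OF snoc.prems(1) p] m dv snoc by simp
qed

lemma bern: "b \<ge> 1 \<Longrightarrow> 1 + (b - 1) * z \<le> (b::nat) ^ z"
proof (induction z)
  case 0 then show ?case by simp
next
  case (Suc z)
  have "1 + (b - 1) * Suc z = (1 + (b-1)*z) + (b - 1)" by simp
  also have "\<dots> \<le> b^z + (b-1) * b^z"
  proof -
    have "b - 1 \<le> (b-1) * b^z" using Suc.prems by simp
    then show ?thesis using Suc by linarith
  qed
  also have "\<dots> = (1 + (b-1)) * b^z" by (simp add: algebra_simps)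
  also have "\<dots> = b^Suc z" using Suc.prems by simp
  finally show ?case .
qed

theorem corollary5:
  fixes b :: nat and I :: "nat list"
  assumes "b \<ge> 2" and "I \<noteq> []" and "\<forall>d \<in> set I. d < b"
  shows "infinite {N. wARH b N \<and> contiguous_sub I (repr b N)}"
proof -
  define a where "a = from_digits b (1 # I)"
  have b2: "b \<ge> 2" by fact
  have da: "digits b a = rev (1 # I)" unfolding a_def using digits_fd assms by simp
  have apos: "a > 0" unfolding a_def using fd_one_pos[OF b2] by (simp add: Suc_le_eq)
  have good: "wARH b (a*b^z + from_digits b (digits b a)) \<and>
      contiguous_sub I (repr b (a*b^z + from_digits b (digits b a)))" if z: "z \<ge> length I + 1" for z
  proof -
    define M where "M = a*b^z"
    define c where "c = from_digits b (digits b a)"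
    have "c < b ^ length (digits b a)" unfolding c_def using fd_less[OF b2] digits_bound[OF b2] by blast
    also have "\<dots> \<le> b ^ z" using z da b2 by (intro power_increasing) auto
    finally have cz: "c < b^z" .
    have dM: "digits b M = replicate z 0 @ digits b a"
      using digits_pd[OF b2 apos, of 0 z] b2 by (simp add: M_def pd_0)
    have rM: "reversal b M = c"
      unfolding reversal_def repr_def c_def dM by (simp add: fd_zeros)
    have dN: "digits b (M + c) = pd b z c @ digits b a"
      using digits_pd[OF b2 apos cz] M_def by simp
    have "digit_sum b (M + c) = sum_list (pd b z c) + sum_list (digits b a)"
      unfolding digit_sum_def dN by simp
    also have "\<dots> \<le> z * (b - 1) + a"
    proof -
      have "\<forall>x\<in>set (pd b z c). x \<le> b - 1" by (fastforce dest: pd_bound[OF b2])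
      then have "sum_list (pd b z c) \<le> z * (b-1)" using sum_list_le[of "pd b z c" "b-1"] by simp
      then show ?thesis using ds_le[OF b2, of a] by linarith
    qed
    also have "\<dots> \<le> a * (1 + (b-1)*z)"
    proof -
      have t: "z*(b-1) \<le> a*((b-1)*z)" using mult_le_mono1[of 1 a "(b-1)*z"] apos by (simp add: mult.commute)
      then show ?thesis by (simp add: distrib_left)
    qed
    also have "\<dots> \<le> a * b^z" using bern[of b z] b2 by (intro mult_le_mono2) simp
    finally have le: "digit_sum b (M + c) \<le> M" unfolding M_def .
    have w: "wARH b (M + c)"
      unfolding wARH_def
    proof
      show "M + c > 0" using apos b2 M_def by simp
      show "\<exists>A. M + c = A + digit_sum b (M + c) + reversal b (A + digit_sum b (M + c))"
        by (rule exI[of _ "M - digit_sum b (M + c)"]) (use le rM in simp)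
    qed
    have "repr b (M + c) = [1] @ I @ rev (pd b z c)"
      unfolding repr_def dN da by simp
    then have "contiguous_sub I (repr b (M + c))" unfolding contiguous_sub_def by blast
    then show ?thesis using w M_def c_def by simp
  qed
  have unb: "\<exists>N\<ge>m. N \<in> {N. wARH b N \<and> contiguous_sub I (repr b N)}" for m
  proof -
    define z where "z = m + length I + 1"
    let ?N = "a*b^z + from_digits b (digits b a)"
    have "m \<le> z" unfolding z_def by simp
    also have "z < b^z" by (rule order.strict_trans2[OF less_exp power_mono]) (use b2 in auto)
    also have "b^z \<le> ?N"
    proof -
      have "1 * b^z \<le> a * b^z" using apos by (intro mult_le_mono1) simp
      then show ?thesis unfolding mult_1 by (rule le_trans) (rule le_add1)
    qed
    finally have "m \<le> ?N" by simp
    moreover have "?N \<in> {N. wARH b N \<and> contiguous_sub I (repr b N)}" using good[of z] z_def by simp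
    ultimately show ?thesis by blast
  qed
  show ?thesis
  proof
    assume "finite {N. wARH b N \<and> contiguous_sub I (repr b N)}"
    then obtain m where "\<forall>n\<in>{N. wARH b N \<and> contiguous_sub I (repr b N)}. n \<le> m"
      unfolding finite_nat_set_iff_bounded_le by blast
    then show False using unb[of "Suc m"] by fastforce
  qed
qed

end
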